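(* Let $X,X_1,X_2,\dots$ be i.i.d. positive random variables with $\mathbb{E}X=1$, let $p\ge2$ be an integer and $2<\alpha\le4$, and suppose $\mathbb{P}\{X\ge x\}=O(x^{-p-\alpha})$ as $x\to\infty$. Let $2\le r\le p$ and let $\gamma=(\gamma_1,\dots,\gamma_r)$ be positive integers with $\gamma_1+\dots+\gamma_r=p$. With $S_r=X_1+\dots+X_r$, for any index $1\le k\le r$, $$\mathbb{E}\frac{X_1^{2\gamma_1}\cdots X_r^{2\gamma_r}}{\left(\frac1nS_r+1\right)^{p+1}}X_k^2=O(n^{p-r-\alpha+4})\quad(n\to\infty).$$ *)

theory Defs
  imports "HOL-Probability.Probability" "HOL-Library.Landau_Symbols"
begin

end

theory Submission
  imports Defs
begin

lemma moment_from_tail: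
  fixes Y :: "'a \<Rightarrow> real" and q :: real and D :: nat
  assumes P: "prob_space M" and Ym[measurable]: "Y \<in> borel_measurable M"
    and pos: "AE \<omega> in M. Y \<omega> > 0"
    and tail: "(\<lambda>x::real. measure M {\<omega> \<in> space M. Y \<omega> \<ge> x}) \<in> O[at_top](\<lambda>x. x powr (-q))"
    and Dq: "real D < q"
  shows "integrable M (\<lambda>\<omega>. Y \<omega> ^ D)"
proof (cases "D = 0")
  case True
  interpret prob_space M by (rule P)
  show ?thesis using True by simp
next
  case False
  interpret prob_space M by (rule P)
  have Dpos: "real D > 0" using False by simp
  obtain c where c: "c > 0" and ev: "\<forall>\<^sub>F x in at_top. norm (measure M {\<omega> \<in> space M. Y \<omega> \<ge> x}) \<le> c * norm (x powr (-q))"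
    using tail by (rule landau_o.bigE)
  then obtain x0 where x0: "\<And>x. x \<ge> x0 \<Longrightarrow> measure M {\<omega> \<in> space M. Y \<omega> \<ge> x} \<le> c * norm (x powr (-q))"
    by (auto simp: eventually_at_top_linorder)
  define Z where "Z \<omega> = nat \<lceil>max 0 (Y \<omega>) ^ D\<rceil>" for \<omega>
  have Zm: "Z \<in> measurable M (count_space UNIV)" unfolding Z_def by measurable
  define T :: nat where "T = nat \<lceil>(max 1 x0) ^ D\<rceil>"
  have bound: "measure M {\<omega> \<in> space M. t < Z \<omega>} \<le> c * real t powr (- q / real D)" if t: "t \<ge> T" "t \<ge> 1" for t
  proof -
    have tpos: "real t > 0" using t by simp
    define s where "s = real t powr (1 / real D)"
    have spos: "s > 0" using tpos by (simp add: s_def)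
    have sD: "s ^ D = real t"
    proof -
      have "s ^ D = s powr real D" using spos by (simp add: powr_realpow)
      also have "\<dots> = real t" using Dpos tpos by (simp add: s_def powr_powr)
      finally show ?thesis .
    qed
    have "(max 1 x0) ^ D \<le> real t" using t(1) unfolding T_def by linarith
    then have "(max 1 x0) ^ D \<le> s ^ D" using sD by simp
    then have sx0: "max 1 x0 \<le> s" using spos False power_mono_iff[of "max 1 x0" s D] by auto
    have sub: "{\<omega> \<in> space M. t < Z \<omega>} \<subseteq> {\<omega> \<in> space M. Y \<omega> \<ge> s}"
    proof safe
      fix \<omega> assume "\<omega> \<in> space M" "t < Z \<omega>"
      then have "real t < max 0 (Y \<omega>) ^ D" unfolding Z_def by linarith
      moreover have "0 \<le> max 0 (Y \<omega>)" by simp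
      ultimately have "s ^ D \<le> max 0 (Y \<omega>) ^ D" using sD by simp
      then have "s \<le> max 0 (Y \<omega>)" using spos False power_mono_iff[of s "max 0 (Y \<omega>)" D] by auto
      then show "s \<le> Y \<omega>" using spos by linarith
    qed
    have "measure M {\<omega> \<in> space M. t < Z \<omega>} \<le> measure M {\<omega> \<in> space M. Y \<omega> \<ge> s}"
      using sub by (intro finite_measure_mono) auto
    also have "\<dots> \<le> c * norm (s powr (-q))" using x0[of s] sx0 by simp
    also have "\<dots> = c * real t powr (- q / real D)"
      using spos tpos by (simp add: s_def powr_powr)
    finally show ?thesis .
  qed
  have summ: "summable (\<lambda>t. measure M {\<omega> \<in> space M. t < Z \<omega>})"
  proof (rule summable_comparison_test_ev)
    show "summable (\<lambda>t. c * real t powr (- q / real D))"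
      using Dpos Dq by (intro summable_mult summable_real_powr_iff[THEN iffD2]) (simp add: field_simps)
    show "\<forall>\<^sub>F t in sequentially. norm (measure M {\<omega> \<in> space M. t < Z \<omega>}) \<le> c * real t powr (- q / real D)"
      using bound by (auto simp: eventually_at_top_linorder intro!: exI[of _ "max T 1"])
  qed
  have fin: "(\<integral>\<^sup>+\<omega>. of_nat (Z \<omega>) \<partial>M) < \<top>"
    using summ by (simp add: nn_integral_nat_function[OF Zm] emeasure_eq_measure ennreal_suminf_neq_top less_top)
  have "(\<integral>\<^sup>+\<omega>. ennreal (norm (Y \<omega> ^ D)) \<partial>M) \<le> (\<integral>\<^sup>+\<omega>. of_nat (Z \<omega>) \<partial>M)"
  proof (rule nn_integral_mono_AE)
    show "AE \<omega> in M. ennreal (norm (Y \<omega> ^ D)) \<le> of_nat (Z \<omega>)"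
      using pos
    proof eventually_elim
      case (elim \<omega>)
      then have "norm (Y \<omega> ^ D) = max 0 (Y \<omega>) ^ D" by (simp add: power_abs)
      also have "\<dots> \<le> real (Z \<omega>)" unfolding Z_def by linarith
      finally show ?case by (simp add: ennreal_of_nat_eq_real_of_nat)
    qed
  qed
  then have "(\<integral>\<^sup>+\<omega>. ennreal (norm (Y \<omega> ^ D)) \<partial>M) < \<top>" using fin by (meson order.strict_trans1)
  then show ?thesis by (intro integrableI_bounded) auto
qed

theorem lemma10:
  fixes M :: "'a measure" and X :: "nat \<Rightarrow> 'a \<Rightarrow> real"
    and p r k :: nat and \<alpha> :: real and \<gamma> :: "nat \<Rightarrow> nat"
  assumes "prob_space M"
    and rv: "\<And>i. X i \<in> borel_measurable M"
    and indep: "prob_space.indep_vars M (\<lambda>_. borel) X UNIV"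
    and ident: "\<And>i. distr M borel (X i) = distr M borel (X 0)"
    and pos: "\<And>i. AE \<omega> in M. X i \<omega> > 0"
    and mean: "integrable M (X 0)" "prob_space.expectation M (X 0) = 1"
    and p: "p \<ge> 2" and \<alpha>: "2 < \<alpha>" "\<alpha> \<le> 4"
    and tail: "(\<lambda>x::real. measure M {\<omega> \<in> space M. X 0 \<omega> \<ge> x})
                 \<in> O[at_top](\<lambda>x. x powr (- (real p + \<alpha>)))"
    and r: "2 \<le> r" "r \<le> p"
    and \<gamma>pos: "\<And>i. i \<in> {1..r} \<Longrightarrow> \<gamma> i > 0"
    and \<gamma>sum: "(\<Sum>i=1..r. \<gamma> i) = p"
    and k: "k \<in> {1..r}"
  shows "(\<forall>n::nat. n \<ge> 1 \<longrightarrow> integrable M (\<lambda>\<omega>.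
            (\<Prod>i=1..r. X i \<omega> ^ (2 * \<gamma> i)) * X k \<omega> ^ 2
              / ((\<Sum>i=1..r. X i \<omega>) / real n + 1) ^ (p + 1)))
       \<and> (\<lambda>n::nat. prob_space.expectation M (\<lambda>\<omega>.
            (\<Prod>i=1..r. X i \<omega> ^ (2 * \<gamma> i)) * X k \<omega> ^ 2
              / ((\<Sum>i=1..r. X i \<omega>) / real n + 1) ^ (p + 1)))
         \<in> O(\<lambda>n. real n powr (real p - real r - \<alpha> + 4))"
proof -
  interpret prob_space M by (rule assms(1))
  note rv[measurable]
  define I where "I = {1..r}"
  have finI: "finite I" by (simp add: I_def)
  define a where "a i = 2 * \<gamma> i + (if i = k then 2 else 0)" for i
  have asum: "(\<Sum>i\<in>I. a i) = 2 * p + 2"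
    using k \<gamma>sum by (simp add: a_def I_def sum.distrib sum_distrib_left[symmetric])
  have age: "a i \<ge> 2" if "i \<in> I" for i
    using \<gamma>pos[of i] that by (auto simp: a_def I_def)
  have Ine: "I \<noteq> {}" using r by (auto simp: I_def)
  obtain j where jI: "j \<in> I" and jM: "a j = Max (a ` I)"
    using Max_in[of "a ` I"] finI Ine by (metis finite_imageI image_iff image_is_empty)
  have jmax: "\<And>i. i \<in> I \<Longrightarrow> a i \<le> a j"
    unfolding jM using finI by (intro Max_ge) auto
  define m where "m = a j - (p + 2)"
  define d where "d i = (if i = j then a j - m else a i)" for i
  have d_le: "d i \<le> p + 2" if "i \<in> I" for i
  proof (cases "i = j")
    case True then show ?thesis by (simp add: d_def m_def)
  next
    case False
    have "a i + a j = (\<Sum>l\<in>{i,j}. a l)" using False by simp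
    also have "\<dots> \<le> (\<Sum>l\<in>I. a l)" using that jI finI by (intro sum_mono2) auto
    finally have "a i + a j \<le> 2 * p + 2" using asum by simp
    with jmax[OF that] False show ?thesis by (simp add: d_def)
  qed
  have aj: "a j + 2 * (r - 1) \<le> 2 * p + 2"
  proof -
    have "(\<Sum>l\<in>I - {j}. 2) \<le> (\<Sum>l\<in>I - {j}. a l)" using age by (intro sum_mono) auto
    moreover have "(\<Sum>l\<in>I. a l) = a j + (\<Sum>l\<in>I - {j}. a l)"
      using jI finI by (simp add: sum.remove)
    moreover have "card (I - {j}) = r - 1" using jI by (simp add: I_def)
    ultimately show ?thesis using asum by simp
  qed
  define e where "e = real p - real r - \<alpha> + 4"
  have m_e: "real m \<le> e"
  proof (cases "a j \<le> p + 2")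
    case True then show ?thesis using r \<alpha> by (simp add: m_def e_def)
  next
    case False
    then have "real m = real (a j) - real p - 2" by (simp add: m_def)
    then show ?thesis using aj r \<alpha> by (simp add: e_def)
  qed
  have m_le: "m \<le> p + 1" using aj r by (simp add: m_def)
  define G where "G \<omega> = (\<Prod>i\<in>I. X i \<omega> ^ d i)" for \<omega>
  have Gint: "integrable M G"
  proof -
    have ind: "indep_vars (\<lambda>_. borel) (\<lambda>i \<omega>. X i \<omega> ^ d i) I"
      by (rule indep_vars_compose2[OF indep_vars_subset[OF indep]]) auto
    have "integrable M (\<lambda>\<omega>. X i \<omega> ^ d i)" if "i \<in> I" for i
    proof -
      have "integrable M (\<lambda>\<omega>. X 0 \<omega> ^ d i)"
        by (rule moment_from_tail[OF assms(1) rv pos tail]) (use d_le[OF that] \<alpha> in simp)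
      then have "integrable (distr M borel (X 0)) (\<lambda>x. x ^ d i)"
        by (subst integrable_distr_eq) auto
      then have "integrable (distr M borel (X i)) (\<lambda>x. x ^ d i)" unfolding ident[of i] .
      then show ?thesis by (subst (asm) integrable_distr_eq) auto
    qed
    then show ?thesis unfolding G_def by (intro indep_vars_integrable[OF finI ind])
  qed
  define F where "F n \<omega> = (\<Prod>i=1..r. X i \<omega> ^ (2 * \<gamma> i)) * X k \<omega> ^ 2
              / ((\<Sum>i=1..r. X i \<omega>) / real n + 1) ^ (p + 1)" for n \<omega>
  have Fm: "F n \<in> borel_measurable M" for n unfolding F_def by measurable
  have AEpos: "AE \<omega> in M. \<forall>i. X i \<omega> > 0" using pos by (simp add: AE_all_countable)
  have Gnn: "AE \<omega> in M. 0 \<le> G \<omega>"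
    using AEpos by eventually_elim (auto simp: G_def less_imp_le intro!: prod_nonneg)
  have ptw: "AE \<omega> in M. 0 \<le> F n \<omega> \<and> F n \<omega> \<le> real n ^ m * G \<omega>" if n: "n \<ge> 1" for n
    using AEpos
  proof eventually_elim
    case (elim \<omega>)
    define x where "x i = X i \<omega>" for i
    have xpos: "\<And>i. x i > 0" using elim by (simp add: x_def)
    define S where "S = (\<Sum>i\<in>I. x i)"
    have num: "(\<Prod>i=1..r. X i \<omega> ^ (2 * \<gamma> i)) * X k \<omega> ^ 2 = x j ^ m * (\<Prod>i\<in>I. x i ^ d i)"
    proof -
      have "(\<Prod>i=1..r. X i \<omega> ^ (2 * \<gamma> i)) * X k \<omega> ^ 2 = (\<Prod>i\<in>I. x i ^ a i)"
        using k by (simp add: I_def x_def a_def power_add prod.distrib if_distrib[of "\<lambda>e. _ ^ e"] prod.If_cases)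
      also have "\<dots> = (\<Prod>i\<in>I. x i ^ d i * (if i = j then x j ^ m else 1))"
        by (intro prod.cong refl) (auto simp: d_def m_def power_add[symmetric])
      also have "\<dots> = x j ^ m * (\<Prod>i\<in>I. x i ^ d i)"
        using jI finI by (simp add: prod.distrib prod.delta)
      finally show ?thesis .
    qed
    have Spos: "S \<ge> 0" unfolding S_def using xpos by (intro sum_nonneg) (auto intro: less_imp_le)
    have xjS: "x j \<le> S" unfolding S_def using xpos jI finI by (intro member_le_sum) (auto intro: less_imp_le)
    have Snn: "(\<Sum>i=1..r. X i \<omega>) = S" by (simp add: S_def I_def x_def)
    have Gx: "G \<omega> = (\<Prod>i\<in>I. x i ^ d i)" by (simp add: G_def x_def)
    have Gp: "G \<omega> \<ge> 0" using xpos by (simp add: Gx prod_nonneg less_imp_le)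
    have npos: "real n > 0" using n by simp
    have den1: "(S / real n + 1) ^ (p + 1) \<ge> (S / real n + 1) ^ m"
      using Spos npos m_le by (intro power_increasing) auto
    have den2: "(S / real n + 1) ^ m \<ge> (x j / real n) ^ m"
    proof (rule power_mono)
      have "x j / real n \<le> S / real n" using xjS npos by (intro divide_right_mono) auto
      then show "x j / real n \<le> S / real n + 1" by linarith
      show "0 \<le> x j / real n" using xpos[of j] npos by simp
    qed
    have cpos: "(x j / real n) ^ m > 0" using xpos[of j] npos by simp
    have Fx: "F n \<omega> = x j ^ m * G \<omega> / (S / real n + 1) ^ (p + 1)"
      unfolding F_def num Snn Gx by (rule refl)
    have "F n \<omega> \<le> x j ^ m * G \<omega> / (x j / real n) ^ m"
      unfolding Fx using den1 den2 cpos Gp xpos[of j]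
      by (intro divide_left_mono) auto
    also have "\<dots> = real n ^ m * G \<omega>"
      using xpos[of j] npos by (simp add: power_divide field_simps)
    finally have up: "F n \<omega> \<le> real n ^ m * G \<omega>" .
    have "0 \<le> F n \<omega>" unfolding Fx using Gp xpos[of j] Spos npos by simp
    with up show ?case by simp
  qed
  have Fint: "integrable M (F n)" if n: "n \<ge> 1" for n
  proof (rule Bochner_Integration.integrable_bound[OF integrable_mult_right[OF Gint, of "real n ^ m"] Fm])
    show "AE \<omega> in M. norm (F n \<omega>) \<le> norm (real n ^ m * G \<omega>)"
      using ptw[OF n] by eventually_elim auto
  qed
  have Ebound: "norm (expectation (F n)) \<le> expectation G * norm (real n powr e)" if n: "n \<ge> 1" for n
  proof -
    have nn: "0 \<le> expectation (F n)"
      using ptw[OF n] by (intro integral_nonneg_AE) (auto elim: eventually_mono)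
    have "expectation (F n) \<le> expectation (\<lambda>\<omega>. real n ^ m * G \<omega>)"
      using ptw[OF n] Fint[OF n] Gint by (intro integral_mono_AE) (auto elim: eventually_mono)
    also have "\<dots> = real n ^ m * expectation G" by simp
    also have "\<dots> \<le> real n powr e * expectation G"
    proof (rule mult_right_mono)
      show "0 \<le> expectation G" using Gnn by (rule integral_nonneg_AE)
      have "real n ^ m = real n powr real m" using n by (simp add: powr_realpow)
      also have "\<dots> \<le> real n powr e" using n m_e by (intro powr_mono) auto
      finally show "real n ^ m \<le> real n powr e" .
    qed
    finally show ?thesis using nn by (simp add: mult.commute)
  qed
  have "(\<forall>n::nat. n \<ge> 1 \<longrightarrow> integrable M (F n))
        \<and> (\<lambda>n. expectation (F n)) \<in> O(\<lambda>n. real n powr (real p - real r - \<alpha> + 4))"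
  proof
    show "\<forall>n::nat. n \<ge> 1 \<longrightarrow> integrable M (F n)" using Fint by blast
  next
    show "(\<lambda>n. expectation (F n)) \<in> O(\<lambda>n. real n powr (real p - real r - \<alpha> + 4))"
      unfolding e_def[symmetric]
      by (rule bigoI[where c = "expectation G"]) (use Ebound in \<open>auto simp: eventually_at_top_linorder\<close>)
  qed
  then show ?thesis unfolding F_def[abs_def] .
qed
end
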